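(* Let $T$ be a nonempty compact Hausdorff topological space and $\{f_t:\ t\in T\}$ a family of convex functions $f_t:X\to\mathbb{R}\cup\{+\infty\}$ (not necessarily lower semicontinuous) such that for each $z\in X$ the map $t\mapsto f_t(z)$ is upper semicontinuous on $T$. Let $f:=\sup_{t\in T}f_t$. Then \[ \operatorname{dom}f=\bigcap_{t\in T}\operatorname{dom}f_t, \] and for every $x\in\operatorname{dom}f$, \[ \mathbb{R}_+(\operatorname{dom}f-x)=\bigcap_{t\in T}\mathbb{R}_+(\operatorname{dom}f_t-x). \]
   Context: $X$ is a real separated locally convex space; $\operatorname{dom}g=\{x: g(x)<+\infty\}$; $\mathbb{R}_+A=\{\lambda a:\lambda\ge0, a\in A\}$. *)

theory Defs
  imports "HOL-Analysis.Analysis"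
begin

definition edom :: "('a \<Rightarrow> ereal) \<Rightarrow> 'a set" where
  "edom g = {x. g x < \<infinity>}"

text \<open>Convexity of a function with values in the reals extended by +infinity
  (the value -infinity is excluded separately).\<close>
definition convex_ext :: "('a::real_vector \<Rightarrow> ereal) \<Rightarrow> bool" where
  "convex_ext g \<longleftrightarrow> (\<forall>x y u. 0 < u \<and> u < 1 \<longrightarrow>
      g ((1 - u) *\<^sub>R x + u *\<^sub>R y) \<le> ereal (1 - u) * g x + ereal u * g y)"

definition usc_on :: "'b::topological_space set \<Rightarrow> ('b \<Rightarrow> ereal) \<Rightarrow> bool" where
  "usc_on T g \<longleftrightarrow> (\<forall>t\<in>T. \<forall>c. g t < c \<longrightarrow>
      (\<exists>U. open U \<and> t \<in> U \<and> (\<forall>s\<in>U \<inter> T. g s < c)))"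

definition cone_gen :: "'a::real_vector set \<Rightarrow> 'a set" where
  "cone_gen A = {l *\<^sub>R a | l a. l \<ge> 0 \<and> a \<in> A}"

end

theory Submission
  imports Defs
begin

lemma conv_dom:
  assumes "convex_ext g" "g x < \<infinity>" "g y < \<infinity>" "0 \<le> u" "u \<le> 1"
  shows "g ((1 - u) *\<^sub>R x + u *\<^sub>R y) < \<infinity>"
proof (cases "u = 0 \<or> u = 1")
  case True then show ?thesis using assms by auto
next
  case False
  hence u: "0 < u" "u < 1" using assms by auto
  have le: "g ((1 - u) *\<^sub>R x + u *\<^sub>R y) \<le> ereal (1 - u) * g x + ereal u * g y"
    using assms(1) u unfolding convex_ext_def by blast
  have a: "ereal (1 - u) * g x < \<infinity>" using assms(2) u
    by (cases "g x") auto
  have b: "ereal u * g y < \<infinity>" using assms(3) u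
    by (cases "g y") auto
  have "ereal (1 - u) * g x + ereal u * g y < \<infinity>" using a b by simp
  with le show ?thesis by (meson le_less_trans)
qed

theorem lemma5:
  fixes T :: "'b::t2_space set"
    and F :: "'b \<Rightarrow> 'a::real_vector \<Rightarrow> ereal"
    and f :: "'a \<Rightarrow> ereal"
  assumes "compact T" and "T \<noteq> {}"
    and "\<And>t z. t \<in> T \<Longrightarrow> F t z \<noteq> -\<infinity>"
    and "\<And>t. t \<in> T \<Longrightarrow> convex_ext (F t)"
    and "\<And>z. usc_on T (\<lambda>t. F t z)"
    and "f = (\<lambda>z. SUP t\<in>T. F t z)"
  shows "edom f = (\<Inter>t\<in>T. edom (F t)) \<and>
         (\<forall>x\<in>edom f. cone_gen ((\<lambda>y. y - x) ` edom f)
                     = (\<Inter>t\<in>T. cone_gen ((\<lambda>y. y - x) ` edom (F t))))"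
proof -
  have dom: "edom f = (\<Inter>t\<in>T. edom (F t))"
  proof
    show "edom f \<subseteq> (\<Inter>t\<in>T. edom (F t))"
    proof
      fix z assume "z \<in> edom f"
      hence "(SUP t\<in>T. F t z) < \<infinity>" using assms(6) by (simp add: edom_def)
      moreover have "\<And>t. t \<in> T \<Longrightarrow> F t z \<le> (SUP t\<in>T. F t z)" by (rule SUP_upper)
      ultimately show "z \<in> (\<Inter>t\<in>T. edom (F t))"
        unfolding edom_def using le_less_trans by blast
    qed
  next
    show "(\<Inter>t\<in>T. edom (F t)) \<subseteq> edom f"
    proof
      fix z assume z: "z \<in> (\<Inter>t\<in>T. edom (F t))"
      have "\<forall>t\<in>T. \<exists>U. open U \<and> t \<in> U \<and> (\<forall>s\<in>U \<inter> T. F s z < F t z + 1)"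
      proof
        fix t assume t: "t \<in> T"
        have "F t z < F t z + 1" using z t assms(3)[OF t, of z]
          by (cases "F t z") (auto simp: edom_def)
        thus "\<exists>U. open U \<and> t \<in> U \<and> (\<forall>s\<in>U \<inter> T. F s z < F t z + 1)"
          using assms(5)[of z] t unfolding usc_on_def by blast
      qed
      then obtain U where U: "\<And>t. t \<in> T \<Longrightarrow> open (U t) \<and> t \<in> U t \<and> (\<forall>s\<in>U t \<inter> T. F s z < F t z + 1)"
        by metis
      have "T \<subseteq> (\<Union>t\<in>T. U t)" using U by blast
      then obtain K where K: "K \<subseteq> T" "finite K" "T \<subseteq> (\<Union>t\<in>K. U t)"
        using compactE_image[OF assms(1), of T U] U by metis
      have Kne: "K \<noteq> {}" using K assms(2) by auto
      define B where "B = Max ((\<lambda>t. F t z + 1) ` K)"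
      have "B \<in> (\<lambda>t. F t z + 1) ` K" unfolding B_def using K Kne by (intro Max_in) auto
      then obtain k where k: "k \<in> K" "B = F k z + 1" by auto
      have Bfin: "B < \<infinity>" using k K z by (auto simp: edom_def)
      have "\<forall>s\<in>T. F s z \<le> B"
      proof
        fix s assume s: "s \<in> T"
        then obtain j where j: "j \<in> K" "s \<in> U j" using K by auto
        have "F s z < F j z + 1" using U[of j] j s K by auto
        also have "F j z + 1 \<le> B" unfolding B_def using K j by (intro Max_ge) auto
        finally show "F s z \<le> B" by simp
      qed
      hence "(SUP t\<in>T. F t z) \<le> B" by (simp add: SUP_le_iff)
      hence "(SUP t\<in>T. F t z) < \<infinity>" using Bfin by (rule le_less_trans)
      thus "z \<in> edom f" using assms(6) by (simp add: edom_def)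
    qed
  qed
  have cone: "cone_gen ((\<lambda>y. y - x) ` edom f)
                     = (\<Inter>t\<in>T. cone_gen ((\<lambda>y. y - x) ` edom (F t)))" if x: "x \<in> edom f" for x
  proof
    show "cone_gen ((\<lambda>y. y - x) ` edom f) \<subseteq> (\<Inter>t\<in>T. cone_gen ((\<lambda>y. y - x) ` edom (F t)))"
      using dom unfolding cone_gen_def by blast
  next
    show "(\<Inter>t\<in>T. cone_gen ((\<lambda>y. y - x) ` edom (F t))) \<subseteq> cone_gen ((\<lambda>y. y - x) ` edom f)"
    proof
      fix v assume v: "v \<in> (\<Inter>t\<in>T. cone_gen ((\<lambda>y. y - x) ` edom (F t)))"
      show "v \<in> cone_gen ((\<lambda>y. y - x) ` edom f)"
      proof (cases "v = 0")
        case True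
        then show ?thesis using x unfolding cone_gen_def by force
      next
        case False
        have xt: "\<And>t. t \<in> T \<Longrightarrow> F t x < \<infinity>" using x dom by (auto simp: edom_def)
        have "\<forall>t\<in>T. \<exists>e U. e > 0 \<and> open U \<and> t \<in> U \<and> (\<forall>s\<in>U \<inter> T. F s (x + e *\<^sub>R v) < \<infinity>)"
        proof
          fix t assume t: "t \<in> T"
          obtain l y where ly: "v = l *\<^sub>R (y - x)" "l \<ge> 0" "y \<in> edom (F t)"
            using v t unfolding cone_gen_def by blast
          have l: "l > 0" using ly False by (cases "l = 0") auto
          have "x + (1/l) *\<^sub>R v = y" using ly l by simp
          hence "F t (x + (1/l) *\<^sub>R v) < \<infinity>" using ly by (simp add: edom_def)
          then obtain U where "open U \<and> t \<in> U \<and> (\<forall>s\<in>U \<inter> T. F s (x + (1/l) *\<^sub>R v) < \<infinity>)"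
            using assms(5)[of "x + (1/l) *\<^sub>R v"] t unfolding usc_on_def by blast
          thus "\<exists>e U. e > 0 \<and> open U \<and> t \<in> U \<and> (\<forall>s\<in>U \<inter> T. F s (x + e *\<^sub>R v) < \<infinity>)"
            using l by (intro exI[of _ "1/l"]) auto
        qed
        then obtain e U where eU: "\<And>t. t \<in> T \<Longrightarrow> e t > 0 \<and> open (U t) \<and> t \<in> U t \<and> (\<forall>s\<in>U t \<inter> T. F s (x + e t *\<^sub>R v) < \<infinity>)"
          by metis
        have "T \<subseteq> (\<Union>t\<in>T. U t)" using eU by blast
        then obtain K where K: "K \<subseteq> T" "finite K" "T \<subseteq> (\<Union>t\<in>K. U t)"
          using compactE_image[OF assms(1), of T U] eU by metis
        have Kne: "K \<noteq> {}" using K assms(2) by auto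
        define \<epsilon> where "\<epsilon> = Min (e ` K)"
        have "\<epsilon> \<in> e ` K" unfolding \<epsilon>_def using K Kne by (intro Min_in) auto
        hence epos: "\<epsilon> > 0" using eU K by auto
        have "\<forall>s\<in>T. x + \<epsilon> *\<^sub>R v \<in> edom (F s)"
        proof
          fix s assume s: "s \<in> T"
          then obtain j where j: "j \<in> K" "s \<in> U j" using K by auto
          have ej: "e j > 0" using eU j K by auto
          have le: "\<epsilon> \<le> e j" unfolding \<epsilon>_def using K j by (intro Min_le) auto
          have fy: "F s (x + e j *\<^sub>R v) < \<infinity>" using eU[of j] j s K by auto
          define u where "u = \<epsilon> / e j"
          have u: "0 \<le> u" "u \<le> 1" using epos ej le by (auto simp: u_def)
          have eq: "(1 - u) *\<^sub>R x + u *\<^sub>R (x + e j *\<^sub>R v) = x + \<epsilon> *\<^sub>R v"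
            using ej by (simp add: u_def algebra_simps)
          have "F s ((1 - u) *\<^sub>R x + u *\<^sub>R (x + e j *\<^sub>R v)) < \<infinity>"
            by (rule conv_dom[OF assms(4)[OF s] xt[OF s] fy u])
          thus "x + \<epsilon> *\<^sub>R v \<in> edom (F s)" using eq by (simp add: edom_def)
        qed
        hence mem: "x + \<epsilon> *\<^sub>R v \<in> edom f" using dom by auto
        have "v = (1/\<epsilon>) *\<^sub>R ((x + \<epsilon> *\<^sub>R v) - x)" using epos by simp
        have im: "\<epsilon> *\<^sub>R v \<in> (\<lambda>y. y - x) ` edom f"
          using mem by (intro image_eqI[of _ _ "x + \<epsilon> *\<^sub>R v"]) auto
        thus ?thesis using im epos unfolding cone_gen_def
          by (intro CollectI exI[of _ "1/\<epsilon>"] exI[of _ "\<epsilon> *\<^sub>R v"]) auto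
      qed
    qed
  qed
  show ?thesis using dom cone by blast
qed

end
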